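(* Assume $d\geq 3$ and $a,b>0$. With $c=c(d)>0$ the constant such that $P_N(\phi_x\in[0,a]\ \forall x\in A)\geq[c(\frac12\wedge a)]^{|A|}$ for all $A\subset\Lambda_N$, one has for every $N$ \[ \tilde P_{N,a,b}(\Omega_N^+)\ \geq\ \frac{Z_N}{\tilde Z_{N,a,b}}\sum_{A\subset\Lambda_N}\exp(J'|A|)\,P_{\Lambda_N\setminus A}\big(\phi_x\geq 0\ \forall x\in\Lambda_N\setminus A\big), \] where $J'=\log(e^b-1)+\log c+\log(\tfrac12\wedge a)$.
   Context: For a finite set $B\subset\mathbb{Z}^d$ with outer boundary $\partial B$ (points of $\mathbb{Z}^d\setminus B$ at distance $1$ from $B$) and $\phi\in\mathbb{R}^{\mathbb{Z}^d}$, let $H_B(\phi)=\frac{1}{8d}\sum_{x,y\in B\cup\partial B,\ |x-y|=1}(\phi_x-\phi_y)^2$ (sum over ordered pairs), and let $P_B(d\phi)=Z_B^{-1}e^{-H_B(\phi)}\prod_{x\in B}d\phi_x\,\delta_0(d\phi_{B^c})$ be the discrete Gaussian free field on $B$ with zero boundary condition, with normalizing constant $Z_B=\int e^{-H_B(\phi)}\prod_{x\in B}d\phi_x$. Let $\Lambda_N=\{-\lfloor N/2\rfloor,\dots,\lfloor N/2\rfloor\}^d$, $P_N=P_{\Lambda_N}$, $Z_N=Z_{\Lambda_N}$, $H=H_{\Lambda_N}$. Define \[ \tilde P_{N,a,b}(d\phi)=\frac{1}{\tilde Z_{N,a,b}}\exp\Big(-H(\phi)+b\sum_{x\in\Lambda_N}\mathbf{1}_{\{\phi_x\in[0,a]\}}\Big)\prod_{x\in\Lambda_N}d\phi_x\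 \delta_0(d\phi_{\Lambda_N^c}), \] with $\tilde Z_{N,a,b}$ its normalizing constant, and $\Omega_N^+=\{\phi_x\geq0\ \forall x\in\Lambda_N\}$. $x\wedge y=\min(x,y)$. *)

theory Defs
  imports "HOL-Analysis.Analysis"
begin

text \<open>Sites of Z^d are vectors int^'d, with d = CARD('d).\<close>

definition adj :: "int^'d \<Rightarrow> int^'d \<Rightarrow> bool" where
  "adj x y \<longleftrightarrow> (\<Sum>i\<in>UNIV. (x$i - y$i)^2) = 1"

definition outer_bd :: "(int^'d) set \<Rightarrow> (int^'d) set" where
  "outer_bd B = {y. y \<notin> B \<and> (\<exists>x\<in>B. adj x y)}"

definition Ham :: "(int^'d) set \<Rightarrow> (int^'d \<Rightarrow> real) \<Rightarrow> real" where
  "Ham B \<phi> = (1 / (8 * real CARD('d))) *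
     (\<Sum>p\<in>{(x,y). x \<in> B \<union> outer_bd B \<and> y \<in> B \<union> outer_bd B \<and> adj x y}.
        (\<phi> (fst p) - \<phi> (snd p))^2)"

definition zext :: "(int^'d) set \<Rightarrow> (int^'d \<Rightarrow> real) \<Rightarrow> (int^'d \<Rightarrow> real)" where
  "zext B \<omega> = (\<lambda>x. if x \<in> B then \<omega> x else 0)"

definition Zgff :: "(int^'d) set \<Rightarrow> real" where
  "Zgff B = (\<integral>\<omega>. exp (- Ham B (zext B \<omega>)) \<partial>(PiM B (\<lambda>_. lborel)))"

definition Pgff :: "(int^'d) set \<Rightarrow> (int^'d \<Rightarrow> real) set \<Rightarrow> real" where
  "Pgff B E = (\<integral>\<omega>. indicator E (zext B \<omega>) * exp (- Ham B (zext B \<omega>))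
                  \<partial>(PiM B (\<lambda>_. lborel))) / Zgff B"

definition Lam :: "nat \<Rightarrow> (int^'d) set" where
  "Lam N = {x. \<forall>i. \<bar>x$i\<bar> \<le> int N div 2}"

definition Ztil :: "nat \<Rightarrow> real \<Rightarrow> real \<Rightarrow> ('d::finite itself) \<Rightarrow> real" where
  "Ztil N a b _ = (\<integral>\<omega>. exp (- Ham (Lam N :: (int^'d) set) (zext (Lam N) \<omega>)
        + b * real (card {x \<in> (Lam N :: (int^'d) set). zext (Lam N) \<omega> x \<in> {0..a}}))
      \<partial>(PiM (Lam N :: (int^'d) set) (\<lambda>_. lborel)))"

definition Ptil :: "nat \<Rightarrow> real \<Rightarrow> real \<Rightarrow> (int^'d::finite \<Rightarrow> real) set \<Rightarrow> real" where
  "Ptil N a b E = (\<integral>\<omega>. indicator E (zext (Lam N) \<omega>) *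
        exp (- Ham (Lam N :: (int^'d) set) (zext (Lam N) \<omega>)
        + b * real (card {x \<in> (Lam N :: (int^'d) set). zext (Lam N) \<omega> x \<in> {0..a}}))
      \<partial>(PiM (Lam N :: (int^'d) set) (\<lambda>_. lborel))) / Ztil N a b TYPE('d)"

end

theory Submission
  imports Defs
begin

lemma adj_sym: "adj x y \<longleftrightarrow> adj y x"
  unfolding adj_def by (simp add: power2_commute)

lemma adj_coord: assumes "adj x y" shows "\<bar>x$i - y$i\<bar> \<le> 1"
proof -
  have "(x$i - y$i)^2 \<le> (\<Sum>j\<in>UNIV. (x$j - y$j)^2)"
    by (rule member_le_sum) auto
  then have "(x$i - y$i)^2 \<le> 1" using assms by (simp add: adj_def)
  then show ?thesis by (simp add: abs_square_le_1)
qed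

lemma finite_box: "finite {x::int^'d. \<forall>i. \<bar>x$i\<bar> \<le> n}"
proof -
  have "{x::int^'d. \<forall>i. \<bar>x$i\<bar> \<le> n} \<subseteq> vec_lambda ` (PiE UNIV (\<lambda>_. {-n..n}))"
  proof
    fix x :: "int^'d" assume "x \<in> {x. \<forall>i. \<bar>x$i\<bar> \<le> n}"
    then have "(\<lambda>i. x$i) \<in> PiE UNIV (\<lambda>_. {-n..n})" by (auto simp: abs_le_iff) (metis minus_le_iff)
    moreover have "x = vec_lambda (\<lambda>i. x$i)" by simp
    ultimately show "x \<in> vec_lambda ` (PiE UNIV (\<lambda>_. {-n..n}))" by blast
  qed
  moreover have "finite (PiE (UNIV::'d set) (\<lambda>_. {-n..n}))"
    by (rule finite_PiE) auto
  ultimately show ?thesis using finite_subset by blast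
qed

lemma Lam_sub: "Lam N \<union> outer_bd (Lam N) \<subseteq> {x::int^'d. \<forall>i. \<bar>x$i\<bar> \<le> int N div 2 + 1}"
proof
  fix y :: "int^'d" assume "y \<in> Lam N \<union> outer_bd (Lam N)"
  then show "y \<in> {x::int^'d. \<forall>i. \<bar>x$i\<bar> \<le> int N div 2 + 1}"
  proof
    assume "y \<in> Lam N" then have "\<forall>i. \<bar>y$i\<bar> \<le> int N div 2" by (simp add: Lam_def)
    then show ?thesis by (simp add: add_increasing2 order_trans[OF _ add_increasing2])
  next
    assume "y \<in> outer_bd (Lam N)"
    then obtain x where x: "x \<in> Lam N" "adj x y" by (auto simp: outer_bd_def)
    show ?thesis
    proof (clarsimp)
      fix i
      have "\<bar>x$i - y$i\<bar> \<le> 1" by (rule adj_coord[OF x(2)])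
      moreover have "\<bar>x$i\<bar> \<le> int N div 2" using x(1) by (auto simp: Lam_def)
      ultimately show "\<bar>y$i\<bar> \<le> int N div 2 + 1" by linarith
    qed
  qed
qed

lemma finite_LamS: "finite (Lam N \<union> outer_bd (Lam N) :: (int^'d) set)"
  using finite_subset[OF Lam_sub finite_box] .

lemma finite_Lam: "finite (Lam N :: (int^'d) set)"
  using finite_LamS by auto

definition Edg :: "(int^'d) set \<Rightarrow> ((int^'d) \<times> (int^'d)) set" where
  "Edg B = {(x,y). x \<in> B \<union> outer_bd B \<and> y \<in> B \<union> outer_bd B \<and> adj x y}"

lemma Ham_Edg: "Ham B f = (1 / (8 * real CARD('d))) * (\<Sum>p\<in>Edg B. (f (fst p) - f (snd p))^2)"
  for B :: "(int^'d) set"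
  unfolding Ham_def Edg_def ..

lemma Ham_sub:
  fixes B L :: "(int^'d) set"
  assumes BL: "B \<subseteq> L" and fin: "finite (L \<union> outer_bd L)"
    and f0: "\<And>x. x \<notin> B \<Longrightarrow> f x = 0"
  shows "Ham B f = Ham L f"
proof -
  have bd: "outer_bd B \<subseteq> L \<union> outer_bd L"
    using BL by (auto simp: outer_bd_def)
  have sub: "Edg B \<subseteq> Edg L" using bd BL by (auto simp: Edg_def)
  have finE: "finite (Edg L)"
    by (rule finite_subset[of _ "(L \<union> outer_bd L) \<times> (L \<union> outer_bd L)"]) (use fin in \<open>auto simp: Edg_def\<close>)
  have "(\<Sum>p\<in>Edg B. (f (fst p) - f (snd p))^2) = (\<Sum>p\<in>Edg L. (f (fst p) - f (snd p))^2)"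
  proof (rule sum.mono_neutral_left[OF finE sub], rule ballI)
    fix p assume p: "p \<in> Edg L - Edg B"
    obtain x y where pxy: "p = (x,y)" by (cases p)
    have a: "adj x y" using p pxy by (auto simp: Edg_def)
    have "x \<notin> B \<union> outer_bd B \<or> y \<notin> B \<union> outer_bd B" using p pxy a by (auto simp: Edg_def)
    then have "x \<notin> B \<and> y \<notin> B"
      using a adj_sym[of x y] by (auto simp: outer_bd_def)
    then show "(f (fst p) - f (snd p))^2 = 0" using f0 pxy by simp
  qed
  then show ?thesis by (simp add: Ham_Edg)
qed

definition cfg :: "(int^'d) set \<Rightarrow> (int^'d) set \<Rightarrow> (int^'d \<Rightarrow> real) \<Rightarrow> (int^'d \<Rightarrow> real) \<Rightarrow> (int^'d \<Rightarrow> real)" where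
  "cfg A B \<psi> \<phi> = (\<lambda>x. if x \<in> A then \<psi> x else if x \<in> B then \<phi> x else 0)"

definition Qf :: "(int^'d) set \<Rightarrow> (int^'d \<Rightarrow> real) \<Rightarrow> real" where
  "Qf L f = (\<Sum>p\<in>Edg L. (f (fst p) - f (snd p))^2)"

definition Lf :: "(int^'d) set \<Rightarrow> (int^'d \<Rightarrow> real) \<Rightarrow> (int^'d \<Rightarrow> real) \<Rightarrow> real" where
  "Lf L f g = (\<Sum>p\<in>Edg L. (f (fst p) - f (snd p)) * (g (fst p) - g (snd p)))"

lemma Qf_add: "Qf L (\<lambda>x. f x + t * g x) = Qf L f + 2 * t * Lf L f g + t^2 * Qf L g"
proof -
  have "Qf L (\<lambda>x. f x + t * g x) = (\<Sum>p\<in>Edg L. (f (fst p) - f (snd p))^2 + 2 * t * ((f (fst p) - f (snd p)) * (g (fst p) - g (snd p))) + t^2 * (g (fst p) - g (snd p))^2)"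
    unfolding Qf_def by (rule sum.cong) (simp_all add: power2_eq_square algebra_simps)
  then show ?thesis unfolding Qf_def Lf_def by (simp add: sum.distrib sum_distrib_left)
qed

lemma clamp_lip: "\<bar>max 0 (min M u) - max 0 (min M v)\<bar> \<le> \<bar>u - v\<bar>" for M u v :: real
  by (simp add: abs_if max_def min_def) 

lemma Qf_clamp: "Qf L (\<lambda>x. max 0 (min M (f x))) \<le> Qf L f"
  unfolding Qf_def
proof (rule sum_mono)
  fix p
  have "\<bar>max 0 (min M (f (fst p))) - max 0 (min M (f (snd p)))\<bar> \<le> \<bar>f (fst p) - f (snd p)\<bar>"
    by (rule clamp_lip)
  then show "(max 0 (min M (f (fst p))) - max 0 (min M (f (snd p))))^2 \<le> (f (fst p) - f (snd p))^2"
    by (metis abs_ge_zero power2_abs power_mono)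
qed

lemma cont_cfg: "continuous_on UNIV (\<lambda>\<phi>. cfg A B \<psi> \<phi> x)"
  unfolding cfg_def by (cases "x \<in> A"; cases "x \<in> B") auto

lemma cont_Qf: "continuous_on UNIV (\<lambda>\<phi>. Qf L (cfg A B \<psi> \<phi>))"
  unfolding Qf_def
  by (intro continuous_intros cont_cfg)

lemma minimizer:
  fixes A B :: "(int^'d) set" and \<psi> :: "int^'d \<Rightarrow> real"
  assumes fA: "finite A" and psi: "\<forall>x\<in>A. \<psi> x \<ge> 0"
  shows "\<exists>h. (\<forall>x. h x \<ge> 0) \<and> (\<forall>\<phi>. Qf L (cfg A B \<psi> h) \<le> Qf L (cfg A B \<psi> \<phi>))"
proof -
  define M where "M = Max (insert 0 (\<psi> ` A))"
  have M0: "M \<ge> 0" unfolding M_def using fA by simp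
  have psiM: "\<psi> x \<le> M" if "x \<in> A" for x unfolding M_def using fA that by simp
  define K where "K = PiE (UNIV::(int^'d) set) (\<lambda>x. if x \<in> B then {0..M} else {0::real})"
  have "compactin (product_topology (\<lambda>_. euclidean) UNIV) K"
    unfolding K_def compactin_PiE by auto
  then have cK: "compact K" by (simp add: euclidean_product_topology)
  have neK: "K \<noteq> {}" unfolding K_def using M0 by (auto simp: PiE_eq_empty_iff)
  obtain h where hK: "h \<in> K" and hmin: "\<forall>k\<in>K. Qf L (cfg A B \<psi> h) \<le> Qf L (cfg A B \<psi> k)"
    using continuous_attains_inf[OF cK neK continuous_on_subset[OF cont_Qf subset_UNIV]] by blast
  have h0: "\<forall>x. h x \<ge> 0" using hK unfolding K_def by (auto simp: PiE_iff split: if_splits)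
  have "Qf L (cfg A B \<psi> h) \<le> Qf L (cfg A B \<psi> \<phi>)" for \<phi>
  proof -
    define k where "k = (\<lambda>x. if x \<in> B then max 0 (min M (\<phi> x)) else 0)"
    have "k \<in> K" unfolding k_def K_def using M0 by (auto simp: PiE_iff)
    then have "Qf L (cfg A B \<psi> h) \<le> Qf L (cfg A B \<psi> k)" using hmin by blast
    also have "cfg A B \<psi> k = (\<lambda>x. max 0 (min M (cfg A B \<psi> \<phi> x)))"
      using psi psiM M0 by (auto simp: cfg_def k_def)
    also have "Qf L \<dots> \<le> Qf L (cfg A B \<psi> \<phi>)" by (rule Qf_clamp)
    finally show ?thesis .
  qed
  with h0 show ?thesis by blast
qed

lemma quad_min: fixes l q :: real assumes "\<forall>t. 0 \<le> 2 * t * l + t^2 * q" shows "l = 0"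
proof (rule ccontr)
  assume l: "l \<noteq> 0"
  have q: "q \<ge> 0" using assms[rule_format, of 1] assms[rule_format, of "-1"] by simp
  define t where "t = - l / (q + 1)"
  have tq: "t * (q + 1) = - l" using q by (simp add: t_def)
  have "(q+1)^2 * (2 * t * l + t^2 * q) = 2 * l * (q+1) * (t * (q+1)) + (t * (q+1))^2 * q"
    by (simp add: power2_eq_square algebra_simps)
  also have "\<dots> = l^2 * (- q - 2)" unfolding tq by (simp add: power2_eq_square algebra_simps)
  also have "\<dots> < 0" using l q by (intro mult_pos_neg) auto
  finally have "(q+1)^2 * (2 * t * l + t^2 * q) < 0" .
  moreover have "0 \<le> 2 * t * l + t^2 * q" using assms by blast
  ultimately show False using q by (simp add: mult_less_0_iff)
qed

lemma decomp:
  fixes A B L :: "(int^'d) set" and \<psi> :: "int^'d \<Rightarrow> real"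
  assumes fin: "finite (L \<union> outer_bd L)" and AB: "A \<inter> B = {}" "A \<union> B = L"
    and psi: "\<forall>x\<in>A. \<psi> x \<ge> 0"
  shows "\<exists>h C. (\<forall>x. h x \<ge> 0) \<and> (\<forall>\<eta>. Ham L (cfg A B \<psi> (\<lambda>x. \<eta> x + h x)) = C + Ham B (zext B \<eta>))"
proof -
  have fA: "finite A" using fin AB by (metis finite_Un)
  obtain h where h0: "\<forall>x. h x \<ge> 0" and hmin: "\<forall>\<phi>. Qf L (cfg A B \<psi> h) \<le> Qf L (cfg A B \<psi> \<phi>)"
    using minimizer[OF fA psi] by blast
  define k where "k = 1 / (8 * real CARD('d))"
  have HQ: "Ham L f = k * Qf L f" for f unfolding Ham_Edg Qf_def k_def ..
  have wadd: "cfg A B \<psi> (\<lambda>x. h x + t * \<eta> x) = (\<lambda>x. cfg A B \<psi> h x + t * zext B \<eta> x)" for t \<eta>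
    using AB by (auto simp: cfg_def zext_def intro!: ext)
  have "Qf L (cfg A B \<psi> (\<lambda>x. \<eta> x + h x)) = Qf L (cfg A B \<psi> h) + Qf L (zext B \<eta>)" for \<eta>
  proof -
    have "\<forall>t. 0 \<le> 2 * t * Lf L (cfg A B \<psi> h) (zext B \<eta>) + t^2 * Qf L (zext B \<eta>)"
    proof
      fix t
      have "Qf L (cfg A B \<psi> h) \<le> Qf L (cfg A B \<psi> (\<lambda>x. h x + t * \<eta> x))" using hmin by blast
      also have "\<dots> = Qf L (cfg A B \<psi> h) + 2 * t * Lf L (cfg A B \<psi> h) (zext B \<eta>) + t^2 * Qf L (zext B \<eta>)"
        unfolding wadd Qf_add ..
      finally show "0 \<le> 2 * t * Lf L (cfg A B \<psi> h) (zext B \<eta>) + t^2 * Qf L (zext B \<eta>)" by simp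
    qed
    then have "Lf L (cfg A B \<psi> h) (zext B \<eta>) = 0" by (rule quad_min)
    moreover have "cfg A B \<psi> (\<lambda>x. \<eta> x + h x) = cfg A B \<psi> (\<lambda>x. h x + 1 * \<eta> x)"
      by (simp add: add.commute)
    ultimately show ?thesis unfolding wadd using Qf_add[of L "cfg A B \<psi> h" 1 "zext B \<eta>"] by simp
  qed
  moreover have "Ham B (zext B \<eta>) = Ham L (zext B \<eta>)" for \<eta>
    by (rule Ham_sub) (use AB fin in \<open>auto simp: zext_def\<close>)
  ultimately have "\<forall>\<eta>. Ham L (cfg A B \<psi> (\<lambda>x. \<eta> x + h x)) = k * Qf L (cfg A B \<psi> h) + Ham B (zext B \<eta>)"
    by (simp add: HQ distrib_left)
  with h0 show ?thesis by blast
qed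

lemma psf: "product_sigma_finite (\<lambda>_::'i. lborel :: real measure)"
  unfolding product_sigma_finite_def by (simp add: sigma_finite_lborel)

lemma meas_Ham:
  assumes [measurable]: "\<And>x. (\<lambda>\<omega>. F \<omega> x) \<in> borel_measurable M"
  shows "(\<lambda>\<omega>. Ham L (F \<omega>)) \<in> borel_measurable M"
  unfolding Ham_Edg by measurable

lemma ind_prod:
  assumes "finite S"
  shows "indicator {\<phi>. \<forall>x\<in>S. \<phi> x \<in> I} f = (\<Prod>x\<in>S. indicator I (f x) :: real)"
  using assms by (induction S rule: finite_induct) (auto simp: indicator_def)

lemma meas_ind:
  assumes [measurable]: "\<And>x. (\<lambda>\<omega>. F \<omega> x) \<in> borel_measurable M" and I[measurable]: "I \<in> sets borel"
    and S: "finite S"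
  shows "(\<lambda>\<omega>. indicator {\<phi>. \<forall>x\<in>S. \<phi> x \<in> I} (F \<omega>) :: real) \<in> borel_measurable M"
  unfolding ind_prod[OF S] by measurable

lemma meas_zext: "(\<lambda>\<omega>. zext L \<omega> x) \<in> borel_measurable (PiM L (\<lambda>_. lborel))"
  unfolding zext_def by (cases "x \<in> L") auto

lemma meas_cfg: "(\<lambda>\<phi>. cfg A B \<psi> \<phi> x) \<in> borel_measurable (PiM B (\<lambda>_. lborel))"
  unfolding cfg_def by (cases "x \<in> A"; cases "x \<in> B") auto

lemma emeasure_lborel_shift:
  assumes "S \<in> sets borel"
  shows "emeasure lborel ((\<lambda>y::real. y + c) -` S) = emeasure lborel S"
proof -
  have "emeasure lborel S = emeasure (distr lborel borel ((+) c)) S"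
    by (simp add: lborel_distr_plus)
  also have "\<dots> = emeasure lborel (((+) c) -` S \<inter> space lborel)"
    by (rule emeasure_distr) (auto simp: assms)
  also have "((+) c) -` S \<inter> space lborel = (\<lambda>y::real. y + c) -` S" by (auto simp: add.commute)
  finally show ?thesis ..
qed

lemma PiM_shift:
  fixes B :: "'i set" and h :: "'i \<Rightarrow> real"
  assumes fB: "finite B"
  shows "distr (PiM B (\<lambda>_. lborel)) (PiM B (\<lambda>_. lborel)) (\<lambda>\<eta>. \<lambda>x\<in>B. \<eta> x + h x) = PiM B (\<lambda>_. lborel)"
proof -
  interpret product_sigma_finite "\<lambda>_::'i. lborel :: real measure" by (rule psf)
  have T: "(\<lambda>\<eta>. \<lambda>x\<in>B. \<eta> x + h x) \<in> measurable (PiM B (\<lambda>_. lborel)) (PiM B (\<lambda>_. lborel))"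
    by (intro measurable_restrict) auto
  show ?thesis
  proof (rule PiM_eqI[OF fB])
    show "sets (distr (PiM B (\<lambda>_. lborel)) (PiM B (\<lambda>_. lborel)) (\<lambda>\<eta>. \<lambda>x\<in>B. \<eta> x + h x)) = sets (PiM B (\<lambda>_. lborel))"
      by simp
  next
    fix S :: "'i \<Rightarrow> real set" assume S: "\<And>i. i \<in> B \<Longrightarrow> S i \<in> sets lborel"
    have "PiE B S \<in> sets (PiM B (\<lambda>_. lborel))" using S by (auto intro: sets_PiM_I_finite[OF fB])
    then have "emeasure (distr (PiM B (\<lambda>_. lborel)) (PiM B (\<lambda>_. lborel)) (\<lambda>\<eta>. \<lambda>x\<in>B. \<eta> x + h x)) (PiE B S)
       = emeasure (PiM B (\<lambda>_. lborel)) ((\<lambda>\<eta>. \<lambda>x\<in>B. \<eta> x + h x) -` PiE B S \<inter> space (PiM B (\<lambda>_. lborel)))"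
      by (rule emeasure_distr[OF T])
    also have "(\<lambda>\<eta>. \<lambda>x\<in>B. \<eta> x + h x) -` PiE B S \<inter> space (PiM B (\<lambda>_. lborel))
        = PiE B (\<lambda>i. (\<lambda>y. y + h i) -` S i)"
      by (auto simp: space_PiM PiE_iff)
    also have "emeasure (PiM B (\<lambda>_. lborel)) (PiE B (\<lambda>i. (\<lambda>y. y + h i) -` S i))
        = (\<Prod>i\<in>B. emeasure lborel ((\<lambda>y. y + h i) -` S i))"
      using S by (intro emeasure_PiM[OF fB]) (auto intro!: measurable_sets_borel[where M=borel])
    also have "\<dots> = (\<Prod>i\<in>B. emeasure lborel (S i))"
      using S by (intro prod.cong refl emeasure_lborel_shift) auto
    finally show "emeasure (distr (PiM B (\<lambda>_. lborel)) (PiM B (\<lambda>_. lborel)) (\<lambda>\<eta>. \<lambda>x\<in>B. \<eta> x + h x)) (PiE B S)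
       = (\<Prod>i\<in>B. emeasure lborel (S i))" .
  qed
qed

lemma nn_shift:
  fixes B :: "'i set" and h :: "'i \<Rightarrow> real"
  assumes fB: "finite B" and f: "f \<in> borel_measurable (PiM B (\<lambda>_. lborel))"
  shows "(\<integral>\<^sup>+\<phi>. f \<phi> \<partial>PiM B (\<lambda>_. lborel)) = (\<integral>\<^sup>+\<eta>. f (\<lambda>x\<in>B. \<eta> x + h x) \<partial>PiM B (\<lambda>_. lborel))"
proof -
  have T: "(\<lambda>\<eta>. \<lambda>x\<in>B. \<eta> x + h x) \<in> measurable (PiM B (\<lambda>_. lborel)) (PiM B (\<lambda>_. lborel))"
    by (intro measurable_restrict) auto
  have "(\<integral>\<^sup>+\<phi>. f \<phi> \<partial>PiM B (\<lambda>_. lborel)) = (\<integral>\<^sup>+\<phi>. f \<phi> \<partial>distr (PiM B (\<lambda>_. lborel)) (PiM B (\<lambda>_. lborel)) (\<lambda>\<eta>. \<lambda>x\<in>B. \<eta> x + h x))"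
    by (simp add: PiM_shift[OF fB])
  also have "\<dots> = (\<integral>\<^sup>+\<eta>. f (\<lambda>x\<in>B. \<eta> x + h x) \<partial>PiM B (\<lambda>_. lborel))"
    by (rule nn_integral_distr[OF T]) (simp add: f)
  finally show ?thesis .
qed

abbreviation "muP X \<equiv> PiM X (\<lambda>_. lborel :: real measure)"

lemma zext_merge:
  assumes "L = A \<union> B"
  shows "zext L (merge A B (\<psi>, \<phi>)) = cfg A B \<psi> \<phi>"
  using assms by (auto simp: zext_def merge_def cfg_def intro!: ext)

lemma Om_eq: "{\<phi>::'a \<Rightarrow> real. \<forall>x\<in>S. 0 \<le> \<phi> x} = {\<phi>. \<forall>x\<in>S. \<phi> x \<in> {0..}}"
  by auto

lemma pw_key:
  fixes A B L :: "(int^'d) set" and \<psi> :: "int^'d \<Rightarrow> real" and a :: real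
  assumes fin: "finite (L \<union> outer_bd L)" and AB: "A \<inter> B = {}" "A \<union> B = L"
  defines "K0 \<equiv> (\<integral>\<^sup>+\<phi>. ennreal (exp (- Ham B (zext B \<phi>))) \<partial>muP B)"
  defines "K1 \<equiv> (\<integral>\<^sup>+\<phi>. ennreal (indicator {\<phi>. \<forall>x\<in>B. 0 \<le> \<phi> x} (zext B \<phi>) * exp (- Ham B (zext B \<phi>))) \<partial>muP B)"
  shows "K0 * (\<integral>\<^sup>+\<phi>. ennreal (indicator {\<phi>. \<forall>x\<in>L. 0 \<le> \<phi> x} (cfg A B \<psi> \<phi>) * indicator {\<phi>. \<forall>x\<in>A. \<phi> x \<in> {0..a}} (cfg A B \<psi> \<phi>) * exp (- Ham L (cfg A B \<psi> \<phi>))) \<partial>muP B)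
     \<ge> K1 * (\<integral>\<^sup>+\<phi>. ennreal (indicator {\<phi>. \<forall>x\<in>A. \<phi> x \<in> {0..a}} (cfg A B \<psi> \<phi>) * exp (- Ham L (cfg A B \<psi> \<phi>))) \<partial>muP B)"
proof (cases "\<forall>x\<in>A. \<psi> x \<in> {0..a}")
  case False
  then have "indicator {\<phi>. \<forall>x\<in>A. \<phi> x \<in> {0..a}} (cfg A B \<psi> \<phi>) = (0::real)" for \<phi>
    by (auto simp: cfg_def indicator_def)
  then show ?thesis by simp
next
  case True
  have fL: "finite L" using fin by simp
  have fB: "finite B" using fL AB by auto
  have psi0: "\<forall>x\<in>A. \<psi> x \<ge> 0" using True by auto
  obtain h C where h0: "\<forall>x. h x \<ge> 0"
    and hd: "\<forall>\<eta>. Ham L (cfg A B \<psi> (\<lambda>x. \<eta> x + h x)) = C + Ham B (zext B \<eta>)"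
    using decomp[OF fin AB psi0] by blast
  have indA: "indicator {\<phi>. \<forall>x\<in>A. \<phi> x \<in> {0..a}} (cfg A B \<psi> \<phi>) = (1::real)" for \<phi>
    using True by (auto simp: cfg_def indicator_def)
  have cfg_r: "cfg A B \<psi> (\<lambda>x\<in>B. \<eta> x + h x) = cfg A B \<psi> (\<lambda>x. \<eta> x + h x)" for \<eta>
    by (auto simp: cfg_def intro!: ext)
  have mH: "(\<lambda>\<phi>. Ham L (cfg A B \<psi> \<phi>)) \<in> borel_measurable (muP B)"
    by (rule meas_Ham) (rule meas_cfg)
  have mI: "(\<lambda>\<phi>. indicator {\<phi>. \<forall>x\<in>L. 0 \<le> \<phi> x} (cfg A B \<psi> \<phi>) :: real) \<in> borel_measurable (muP B)"
    unfolding Om_eq by (rule meas_ind[OF meas_cfg _ fL]) simp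
  have I2: "(\<integral>\<^sup>+\<phi>. ennreal (indicator {\<phi>. \<forall>x\<in>A. \<phi> x \<in> {0..a}} (cfg A B \<psi> \<phi>) * exp (- Ham L (cfg A B \<psi> \<phi>))) \<partial>muP B)
     = ennreal (exp (- C)) * K0"
  proof -
    have "(\<integral>\<^sup>+\<phi>. ennreal (indicator {\<phi>. \<forall>x\<in>A. \<phi> x \<in> {0..a}} (cfg A B \<psi> \<phi>) * exp (- Ham L (cfg A B \<psi> \<phi>))) \<partial>muP B)
       = (\<integral>\<^sup>+\<phi>. ennreal (exp (- Ham L (cfg A B \<psi> \<phi>))) \<partial>muP B)" unfolding indA by simp
    also have "\<dots> = (\<integral>\<^sup>+\<eta>. ennreal (exp (- Ham L (cfg A B \<psi> (\<lambda>x\<in>B. \<eta> x + h x)))) \<partial>muP B)"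
      by (rule nn_shift[OF fB]) (use mH in measurable)
    also have "\<dots> = (\<integral>\<^sup>+\<eta>. ennreal (exp (- C)) * ennreal (exp (- Ham B (zext B \<eta>))) \<partial>muP B)"
      by (rule nn_integral_cong) (simp add: cfg_r hd exp_diff ennreal_mult'' exp_minus field_simps ennreal_mult[symmetric])
    also have "\<dots> = ennreal (exp (- C)) * K0"
      unfolding K0_def by (rule nn_integral_cmult) (intro measurable_compose[OF meas_Ham[OF meas_zext]] ; measurable)
    finally show ?thesis .
  qed
  have I1: "(\<integral>\<^sup>+\<phi>. ennreal (indicator {\<phi>. \<forall>x\<in>L. 0 \<le> \<phi> x} (cfg A B \<psi> \<phi>) * indicator {\<phi>. \<forall>x\<in>A. \<phi> x \<in> {0..a}} (cfg A B \<psi> \<phi>) * exp (- Ham L (cfg A B \<psi> \<phi>))) \<partial>muP B)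
     \<ge> ennreal (exp (- C)) * K1" (is "?X \<ge> _")
  proof -
    have "(\<integral>\<^sup>+\<phi>. ennreal (indicator {\<phi>. \<forall>x\<in>L. 0 \<le> \<phi> x} (cfg A B \<psi> \<phi>) * indicator {\<phi>. \<forall>x\<in>A. \<phi> x \<in> {0..a}} (cfg A B \<psi> \<phi>) * exp (- Ham L (cfg A B \<psi> \<phi>))) \<partial>muP B)
       = (\<integral>\<^sup>+\<phi>. ennreal (indicator {\<phi>. \<forall>x\<in>L. 0 \<le> \<phi> x} (cfg A B \<psi> \<phi>) * exp (- Ham L (cfg A B \<psi> \<phi>))) \<partial>muP B)" unfolding indA by simp
    also have "\<dots> = (\<integral>\<^sup>+\<eta>. ennreal (indicator {\<phi>. \<forall>x\<in>L. 0 \<le> \<phi> x} (cfg A B \<psi> (\<lambda>x\<in>B. \<eta> x + h x)) * exp (- Ham L (cfg A B \<psi> (\<lambda>x\<in>B. \<eta> x + h x)))) \<partial>muP B)"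
      by (rule nn_shift[OF fB]) (use mH mI in measurable)
    also have "\<dots> \<ge> (\<integral>\<^sup>+\<eta>. ennreal (exp (- C)) * ennreal (indicator {\<phi>. \<forall>x\<in>B. 0 \<le> \<phi> x} (zext B \<eta>) * exp (- Ham B (zext B \<eta>))) \<partial>muP B)"
    proof (rule nn_integral_mono)
      fix \<eta> :: "int^'d \<Rightarrow> real"
      have ind: "indicator {\<phi>. \<forall>x\<in>B. 0 \<le> \<phi> x} (zext B \<eta>) \<le> (indicator {\<phi>. \<forall>x\<in>L. 0 \<le> \<phi> x} (cfg A B \<psi> (\<lambda>x. \<eta> x + h x)) :: real)"
      proof (cases "\<forall>x\<in>B. 0 \<le> zext B \<eta> x")
        case True
        then have "\<forall>x\<in>L. 0 \<le> cfg A B \<psi> (\<lambda>x. \<eta> x + h x) x"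
          using psi0 h0 AB by (auto simp: cfg_def zext_def intro: add_nonneg_nonneg)
        then show ?thesis by (simp add: indicator_def)
      qed (auto simp: indicator_def)
      have "ennreal (exp (- C)) * ennreal (indicator {\<phi>. \<forall>x\<in>B. 0 \<le> \<phi> x} (zext B \<eta>) * exp (- Ham B (zext B \<eta>)))
          = ennreal (indicator {\<phi>. \<forall>x\<in>B. 0 \<le> \<phi> x} (zext B \<eta>) * exp (- (C + Ham B (zext B \<eta>))))"
        by (simp add: ennreal_mult[symmetric] exp_add[symmetric] mult.commute mult.left_commute)
      also have "\<dots> \<le> ennreal (indicator {\<phi>. \<forall>x\<in>L. 0 \<le> \<phi> x} (cfg A B \<psi> (\<lambda>x. \<eta> x + h x)) * exp (- (C + Ham B (zext B \<eta>))))"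
        using ind by (intro ennreal_leI mult_right_mono) auto
      finally show "ennreal (exp (- C)) * ennreal (indicator {\<phi>. \<forall>x\<in>B. 0 \<le> \<phi> x} (zext B \<eta>) * exp (- Ham B (zext B \<eta>)))
          \<le> ennreal (indicator {\<phi>. \<forall>x\<in>L. 0 \<le> \<phi> x} (cfg A B \<psi> (\<lambda>x\<in>B. \<eta> x + h x)) * exp (- Ham L (cfg A B \<psi> (\<lambda>x\<in>B. \<eta> x + h x))))"
        by (simp add: cfg_r hd)
    qed
    also have "(\<integral>\<^sup>+\<eta>. ennreal (exp (- C)) * ennreal (indicator {\<phi>. \<forall>x\<in>B. 0 \<le> \<phi> x} (zext B \<eta>) * exp (- Ham B (zext B \<eta>))) \<partial>muP B) = ennreal (exp (- C)) * K1"
      unfolding K1_def Om_eq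
      by (rule nn_integral_cmult) (use meas_ind[OF meas_zext _ fB, of "{0..}"] meas_Ham[OF meas_zext, of B B] in measurable)
    finally show ?thesis .
  qed
  have "K1 * ennreal (exp (- C)) * K0 \<le> K0 * (ennreal (exp (- C)) * K1)"
    by (simp add: mult_ac)
  also have "\<dots> \<le> K0 * ?X" by (rule mult_left_mono[OF I1]) simp
  finally show ?thesis unfolding I2 by (simp add: mult_ac)
qed

lemma perA:
  fixes L A :: "(int^'d) set" and a :: real
  assumes fin: "finite (L \<union> outer_bd L)" and AL: "A \<subseteq> L" and Z: "Zgff L \<noteq> 0"
  shows "(\<integral>\<omega>. indicator {\<phi>. \<forall>x\<in>L. 0 \<le> \<phi> x} (zext L \<omega>) * indicator {\<phi>. \<forall>x\<in>A. \<phi> x \<in> {0..a}} (zext L \<omega>) * exp (- Ham L (zext L \<omega>)) \<partial>muP L)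
     \<ge> (\<integral>\<omega>. indicator {\<phi>. \<forall>x\<in>A. \<phi> x \<in> {0..a}} (zext L \<omega>) * exp (- Ham L (zext L \<omega>)) \<partial>muP L) * Pgff (L - A) {\<phi>. \<forall>x\<in>L - A. 0 \<le> \<phi> x}"
proof -
  define B where "B = L - A"
  have AB: "A \<inter> B = {}" "A \<union> B = L" using AL by (auto simp: B_def)
  have fL: "finite L" using fin by simp
  have fA: "finite A" and fB: "finite B" using fL AB by (auto intro: finite_subset)
  interpret product_sigma_finite "\<lambda>_::int^'d. lborel :: real measure" by (rule psf)
  interpret PB: finite_product_sigma_finite "\<lambda>_::int^'d. lborel :: real measure" B
    by standard (rule fB)
  define f1 where "f1 \<omega> = indicator {\<phi>. \<forall>x\<in>L. 0 \<le> \<phi> x} (zext L \<omega>) * indicator {\<phi>. \<forall>x\<in>A. \<phi> x \<in> {0..a}} (zext L \<omega>) * exp (- Ham L (zext L \<omega>))" for \<omega>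
  define f2 where "f2 \<omega> = indicator {\<phi>. \<forall>x\<in>A. \<phi> x \<in> {0..a}} (zext L \<omega>) * exp (- Ham L (zext L \<omega>))" for \<omega>
  define g where "g \<omega> = exp (- Ham L (zext L \<omega>))" for \<omega>
  define k0 where "k0 \<phi> = exp (- Ham B (zext B \<phi>))" for \<phi>
  define k1 where "k1 \<phi> = indicator {\<phi>. \<forall>x\<in>B. 0 \<le> \<phi> x} (zext B \<phi>) * exp (- Ham B (zext B \<phi>))" for \<phi>
  have mf1[measurable]: "f1 \<in> borel_measurable (muP L)"
    unfolding f1_def Om_eq
    using meas_ind[OF meas_zext _ fL, of "{0..}" L] meas_ind[OF meas_zext _ fA, of "{0..a}" L] meas_Ham[OF meas_zext, of L L]
    by measurable
  have mf2[measurable]: "f2 \<in> borel_measurable (muP L)"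
    unfolding f2_def
    using meas_ind[OF meas_zext _ fA, of "{0..a}" L] meas_Ham[OF meas_zext, of L L]
    by measurable
  have mg[measurable]: "g \<in> borel_measurable (muP L)"
    unfolding g_def using meas_Ham[OF meas_zext, of L L] by measurable
  have mk0[measurable]: "k0 \<in> borel_measurable (muP B)"
    unfolding k0_def using meas_Ham[OF meas_zext, of B B] by measurable
  have mk1[measurable]: "k1 \<in> borel_measurable (muP B)"
    unfolding k1_def Om_eq
    using meas_ind[OF meas_zext _ fB, of "{0..}" B] meas_Ham[OF meas_zext, of B B] by measurable
  have f1_0: "0 \<le> f1 \<omega>" "0 \<le> f2 \<omega>" "0 \<le> g \<omega>" "0 \<le> k0 \<phi>" "0 \<le> k1 \<phi>" for \<omega> \<phi>
    by (auto simp: f1_def f2_def g_def k0_def k1_def)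
  have f_le: "f1 \<omega> \<le> g \<omega>" "f2 \<omega> \<le> g \<omega>" "k1 \<phi> \<le> k0 \<phi>" for \<omega> \<phi>
    by (auto simp: f1_def f2_def g_def k0_def k1_def indicator_def)
  define I1 where "I1 = (\<integral>\<^sup>+\<omega>. ennreal (f1 \<omega>) \<partial>muP L)"
  define I2 where "I2 = (\<integral>\<^sup>+\<omega>. ennreal (f2 \<omega>) \<partial>muP L)"
  define Zn where "Zn = (\<integral>\<^sup>+\<omega>. ennreal (g \<omega>) \<partial>muP L)"
  define K0 where "K0 = (\<integral>\<^sup>+\<phi>. ennreal (k0 \<phi>) \<partial>muP B)"
  define K1 where "K1 = (\<integral>\<^sup>+\<phi>. ennreal (k1 \<phi>) \<partial>muP B)"
  have r1: "(\<integral>\<omega>. f1 \<omega> \<partial>muP L) = enn2real I1" unfolding I1_def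
    by (rule integral_eq_nn_integral) (auto simp: f1_0)
  have r2: "(\<integral>\<omega>. f2 \<omega> \<partial>muP L) = enn2real I2" unfolding I2_def
    by (rule integral_eq_nn_integral) (auto simp: f1_0)
  have rZ: "Zgff L = enn2real Zn" unfolding Zn_def Zgff_def g_def[symmetric]
    by (rule integral_eq_nn_integral) (auto simp: f1_0)
  have rP: "Pgff B {\<phi>. \<forall>x\<in>B. 0 \<le> \<phi> x} = enn2real K1 / enn2real K0"
  proof -
    have "(\<integral>\<phi>. k1 \<phi> \<partial>muP B) = enn2real K1" unfolding K1_def
      by (rule integral_eq_nn_integral) (auto simp: f1_0)
    moreover have "(\<integral>\<phi>. k0 \<phi> \<partial>muP B) = enn2real K0" unfolding K0_def
      by (rule integral_eq_nn_integral) (auto simp: f1_0)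
    ultimately show ?thesis unfolding Pgff_def Zgff_def k1_def k0_def by simp
  qed
  have muL: "muP L = muP (A \<union> B)" using AB by simp
  have fub: "integral\<^sup>N (muP L) f = (\<integral>\<^sup>+ \<psi>. (\<integral>\<^sup>+ \<phi>. f (merge A B (\<psi>, \<phi>)) \<partial>muP B) \<partial>muP A)"
    if [measurable]: "f \<in> borel_measurable (muP L)" for f
    unfolding muL by (rule product_nn_integral_fold[OF AB(1) fA fB]) (use that muL in simp)
  have minner: "(\<lambda>\<psi>. \<integral>\<^sup>+ \<phi>. f (merge A B (\<psi>, \<phi>)) \<partial>muP B) \<in> borel_measurable (muP A)"
    if mf: "f \<in> borel_measurable (muP L)" for f
  proof (rule PB.borel_measurable_nn_integral)
    have "f \<circ> merge A B \<in> borel_measurable (muP A \<Otimes>\<^sub>M muP B)"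
      by (rule measurable_comp[OF measurable_merge]) (use mf muL in simp)
    moreover have "f \<circ> merge A B = (\<lambda>(\<psi>, \<phi>). f (merge A B (\<psi>, \<phi>)))" by (auto simp: fun_eq_iff)
    ultimately show "(\<lambda>(\<psi>, \<phi>). f (merge A B (\<psi>, \<phi>))) \<in> borel_measurable (muP A \<Otimes>\<^sub>M muP B)" by simp
  qed
  have key: "K1 * I2 \<le> K0 * I1"
  proof -
    have "K1 * I2 = K1 * (\<integral>\<^sup>+ \<psi>. (\<integral>\<^sup>+ \<phi>. ennreal (f2 (merge A B (\<psi>, \<phi>))) \<partial>muP B) \<partial>muP A)"
      unfolding I2_def by (subst fub) auto
    also have "\<dots> = (\<integral>\<^sup>+ \<psi>. K1 * (\<integral>\<^sup>+ \<phi>. ennreal (f2 (merge A B (\<psi>, \<phi>))) \<partial>muP B) \<partial>muP A)"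
      by (rule nn_integral_cmult[symmetric]) (rule minner, measurable)
    also have "\<dots> \<le> (\<integral>\<^sup>+ \<psi>. K0 * (\<integral>\<^sup>+ \<phi>. ennreal (f1 (merge A B (\<psi>, \<phi>))) \<partial>muP B) \<partial>muP A)"
    proof (rule nn_integral_mono)
      fix \<psi> :: "int^'d \<Rightarrow> real"
      show "K1 * (\<integral>\<^sup>+ \<phi>. ennreal (f2 (merge A B (\<psi>, \<phi>))) \<partial>muP B) \<le> K0 * (\<integral>\<^sup>+ \<phi>. ennreal (f1 (merge A B (\<psi>, \<phi>))) \<partial>muP B)"
        using pw_key[OF fin AB, where \<psi>=\<psi> and a=a]
        unfolding f1_def f2_def zext_merge[OF AB(2)[symmetric]] K0_def K1_def k0_def k1_def
        by simp
    qed
    also have "\<dots> = K0 * (\<integral>\<^sup>+ \<psi>. (\<integral>\<^sup>+ \<phi>. ennreal (f1 (merge A B (\<psi>, \<phi>))) \<partial>muP B) \<partial>muP A)"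
      by (rule nn_integral_cmult) (rule minner, measurable)
    also have "\<dots> = K0 * I1"
      unfolding I1_def by (subst fub) auto
    finally show ?thesis .
  qed
  have Zfin: "Zn \<noteq> \<infinity>" using Z rZ by auto
  have I1le: "I1 \<le> Zn" unfolding I1_def Zn_def by (rule nn_integral_mono) (simp add: f_le ennreal_leI)
  have I2le: "I2 \<le> Zn" unfolding I2_def Zn_def by (rule nn_integral_mono) (simp add: f_le ennreal_leI)
  have K1le: "K1 \<le> K0" unfolding K1_def K0_def by (rule nn_integral_mono) (simp add: f_le ennreal_leI)
  have I1fin: "I1 \<noteq> \<infinity>" and I2fin: "I2 \<noteq> \<infinity>" using I1le I2le Zfin by (auto simp: top_unique)
  have goal: "enn2real I2 * (enn2real K1 / enn2real K0) \<le> enn2real I1"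
  proof (cases "K0 = \<infinity> \<or> enn2real K0 = 0")
    case True
    then have "enn2real K0 = 0" by auto
    then show ?thesis by simp
  next
    case False
    then have K0fin: "K0 \<noteq> \<infinity>" and K0pos: "enn2real K0 > 0" by (auto simp: enn2real_nonneg less_le)
    have "enn2real (K1 * I2) \<le> enn2real (K0 * I1)"
      using key K0fin I1fin by (intro enn2real_mono) (auto simp: ennreal_mult_eq_top_iff top.not_eq_extremum[symmetric] ennreal_mult_less_top)
    then have "enn2real K1 * enn2real I2 \<le> enn2real K0 * enn2real I1" by (simp add: enn2real_mult)
    with K0pos show ?thesis by (simp add: field_simps mult.commute)
  qed
  show ?thesis
    using goal r1 r2 rP unfolding f1_def f2_def B_def by simp
qed

lemma pow_sum: "finite S \<Longrightarrow> (q + 1) ^ card S = (\<Sum>X\<in>Pow S. q ^ card X)" for q :: real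
  using prod_add[of S "\<lambda>_. q" "\<lambda>_. 1"] by simp

lemma expand:
  fixes L :: "'i set" and f :: "'i \<Rightarrow> real" and b a :: real
  assumes fL: "finite L"
  shows "exp (b * real (card {x\<in>L. f x \<in> {0..a}})) = (\<Sum>A\<in>Pow L. (exp b - 1) ^ card A * indicator {\<phi>. \<forall>x\<in>A. \<phi> x \<in> {0..a}} f)"
proof -
  define S where "S = {x\<in>L. f x \<in> {0..a}}"
  have fS: "finite S" using fL by (simp add: S_def)
  have "exp (b * real (card S)) = (exp b - 1 + 1) ^ card S" by (simp add: exp_of_nat_mult[symmetric] mult.commute)
  also have "\<dots> = (\<Sum>X\<in>Pow S. (exp b - 1) ^ card X)" by (rule pow_sum[OF fS])
  also have "\<dots> = (\<Sum>A\<in>{A\<in>Pow L. A \<subseteq> S}. (exp b - 1) ^ card A)"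
    by (rule sum.cong) (auto simp: S_def)
  also have "\<dots> = (\<Sum>A\<in>Pow L. if A \<subseteq> S then (exp b - 1) ^ card A else 0)"
    by (rule sum.inter_filter) (simp add: fL)
  also have "\<dots> = (\<Sum>A\<in>Pow L. (exp b - 1) ^ card A * indicator {\<phi>. \<forall>x\<in>A. \<phi> x \<in> {0..a}} f)"
    by (rule sum.cong) (auto simp: S_def indicator_def)
  finally show ?thesis unfolding S_def .
qed

theorem mainTheorem4:
  fixes a b c :: real and N :: nat
  assumes "CARD('d::finite) \<ge> 3" and "a > 0" and "b > 0" and "c > 0"
    and hc: "\<And>M A. A \<subseteq> (Lam M :: (int^'d) set) \<Longrightarrow>
        Pgff (Lam M) {\<phi>. \<forall>x\<in>A. \<phi> x \<in> {0..a}} \<ge> (c * min (1/2) a) ^ card A"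
  shows "Ptil N a b {\<phi>. \<forall>x\<in>(Lam N :: (int^'d) set). \<phi> x \<ge> 0} \<ge>
     Zgff (Lam N :: (int^'d) set) / Ztil N a b TYPE('d) *
     (\<Sum>A\<in>Pow (Lam N :: (int^'d) set).
        exp ((ln (exp b - 1) + ln c + ln (min (1/2) a)) * real (card A)) *
        Pgff (Lam N - A) {\<phi>. \<forall>x\<in>Lam N - A. \<phi> x \<ge> 0})"
proof -
  define L where "L = (Lam N :: (int^'d) set)"
  have fin: "finite (L \<union> outer_bd L)" unfolding L_def by (rule finite_LamS)
  have fL: "finite L" using fin by simp
  define m where "m = min (1/2) a"
  have m0: "m > 0" using assms by (simp add: m_def)
  define q where "q = exp b - 1"
  have q0: "q > 0" using assms by (simp add: q_def)
  define g where "g \<omega> = exp (- Ham L (zext L \<omega>))" for \<omega>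
  define Ev where "Ev A = {\<phi>::int^'d \<Rightarrow> real. \<forall>x\<in>A. \<phi> x \<in> {0..a}}" for A
  define Om where "Om = {\<phi>::int^'d \<Rightarrow> real. \<forall>x\<in>L. 0 \<le> \<phi> x}"
  define Z where "Z = Zgff L"
  define J where "J A = (\<integral>\<omega>. indicator (Ev A) (zext L \<omega>) * g \<omega> \<partial>muP L)" for A
  define I where "I A = (\<integral>\<omega>. indicator Om (zext L \<omega>) * indicator (Ev A) (zext L \<omega>) * g \<omega> \<partial>muP L)" for A
  define p where "p A = Pgff (L - A) {\<phi>. \<forall>x\<in>L - A. 0 \<le> \<phi> x}" for A
  have Zge: "Z \<ge> 0" unfolding Z_def Zgff_def by (rule integral_nonneg_AE) auto
  have hcA: "Pgff L (Ev A) \<ge> (c * m) ^ card A" if "A \<subseteq> L" for A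
    using hc[of A N] that unfolding L_def Ev_def m_def by simp
  have Zne: "Z \<noteq> 0"
  proof
    assume "Z = 0"
    then have "Pgff L (Ev {}) = 0" by (simp add: Pgff_def Z_def)
    with hcA[of "{}"] show False by simp
  qed
  have Zpos: "Z > 0" using Zge Zne by simp
  have mg[measurable]: "g \<in> borel_measurable (muP L)"
    unfolding g_def using meas_Ham[OF meas_zext, of L L] by measurable
  have intg: "integrable (muP L) g"
    using Zne not_integrable_integral_eq unfolding Z_def Zgff_def g_def by blast
  have mEv: "(\<lambda>\<omega>. indicator (Ev A) (zext L \<omega>) :: real) \<in> borel_measurable (muP L)" if "A \<subseteq> L" for A
    unfolding Ev_def by (rule meas_ind[OF meas_zext _ finite_subset[OF that fL]]) simp
  have mOm: "(\<lambda>\<omega>. indicator Om (zext L \<omega>) :: real) \<in> borel_measurable (muP L)"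
    unfolding Om_def Om_eq by (rule meas_ind[OF meas_zext _ fL]) simp
  have intI: "integrable (muP L) (\<lambda>\<omega>. indicator Om (zext L \<omega>) * indicator (Ev A) (zext L \<omega>) * g \<omega>)"
    if "A \<subseteq> L" for A
  proof (rule Bochner_Integration.integrable_bound[OF intg])
    show "(\<lambda>\<omega>. indicator Om (zext L \<omega>) * indicator (Ev A) (zext L \<omega>) * g \<omega>) \<in> borel_measurable (muP L)"
      using mEv[OF that] mOm by measurable
    show "AE x in muP L. norm (indicator Om (zext L x) * indicator (Ev A) (zext L x) * g x) \<le> norm (g x)"
      by (auto simp: g_def indicator_def)
  qed
  define T where "T = (\<integral>\<omega>. indicator Om (zext L \<omega>) *
        exp (- Ham L (zext L \<omega>) + b * real (card {x \<in> L. zext L \<omega> x \<in> {0..a}})) \<partial>muP L)"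
  have PtilT: "Ptil N a b {\<phi>. \<forall>x\<in>(Lam N :: (int^'d) set). \<phi> x \<ge> 0} = T / Ztil N a b TYPE('d)"
    unfolding Ptil_def T_def L_def Om_def ..
  have T_eq: "T = (\<Sum>A\<in>Pow L. q ^ card A * I A)"
  proof -
    have "T = (\<integral>\<omega>. (\<Sum>A\<in>Pow L. q ^ card A * (indicator Om (zext L \<omega>) * indicator (Ev A) (zext L \<omega>) * g \<omega>)) \<partial>muP L)"
      unfolding T_def
    proof (rule Bochner_Integration.integral_cong[OF refl])
      fix \<omega>
      have "exp (- Ham L (zext L \<omega>) + b * real (card {x \<in> L. zext L \<omega> x \<in> {0..a}}))
          = g \<omega> * (\<Sum>A\<in>Pow L. q ^ card A * indicator (Ev A) (zext L \<omega>))"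
        unfolding g_def exp_add expand[OF fL] q_def Ev_def ..
      then show "indicator Om (zext L \<omega>) * exp (- Ham L (zext L \<omega>) + b * real (card {x \<in> L. zext L \<omega> x \<in> {0..a}}))
          = (\<Sum>A\<in>Pow L. q ^ card A * (indicator Om (zext L \<omega>) * indicator (Ev A) (zext L \<omega>) * g \<omega>))"
        by (simp add: sum_distrib_left mult_ac)
    qed
    also have "\<dots> = (\<Sum>A\<in>Pow L. (\<integral>\<omega>. q ^ card A * (indicator Om (zext L \<omega>) * indicator (Ev A) (zext L \<omega>) * g \<omega>) \<partial>muP L))"
      by (rule Bochner_Integration.integral_sum) (auto intro: intI)
    also have "\<dots> = (\<Sum>A\<in>Pow L. q ^ card A * I A)"
      unfolding I_def by simp
    finally show ?thesis .
  qed
  have IJ: "I A \<ge> J A * p A" if "A \<subseteq> L" for A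
    using perA[OF fin that Zne[unfolded Z_def], of a]
    unfolding I_def J_def p_def g_def Ev_def Om_def by simp
  have JZ: "J A \<ge> Z * (c * m) ^ card A" if "A \<subseteq> L" for A
  proof -
    have "Pgff L (Ev A) = J A / Z" unfolding Pgff_def J_def Z_def g_def ..
    with hcA[OF that] Zpos show ?thesis by (simp add: field_simps)
  qed
  have p0: "p A \<ge> 0" for A
    unfolding p_def Pgff_def Zgff_def
    by (intro divide_nonneg_nonneg integral_nonneg_AE) (auto simp: indicator_def)
  have "Z * (\<Sum>A\<in>Pow L. exp ((ln (exp b - 1) + ln c + ln (min (1/2) a)) * real (card A)) * p A)
      = (\<Sum>A\<in>Pow L. q ^ card A * (Z * (c * m) ^ card A * p A))"
  proof -
    have eA: "exp ((ln (exp b - 1) + ln c + ln (min (1/2) a)) * real (card A)) = (q * c * m) ^ card A" for A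
    proof -
      have "ln (exp b - 1) + ln c + ln (min (1/2) a) = ln (q * c * m)"
        using q0 m0 assms by (simp add: ln_mult q_def m_def)
      then show ?thesis using q0 m0 assms
        by (simp add: mult.commute[of _ "real (card A)"] exp_of_nat_mult)
    qed
    show ?thesis unfolding eA sum_distrib_left by (rule sum.cong) (simp_all add: power_mult_distrib mult_ac)
  qed
  also have "\<dots> \<le> (\<Sum>A\<in>Pow L. q ^ card A * I A)"
  proof (rule sum_mono)
    fix A assume "A \<in> Pow L"
    then have AL: "A \<subseteq> L" by simp
    have "Z * (c * m) ^ card A * p A \<le> J A * p A" using JZ[OF AL] p0 by (rule mult_right_mono)
    also have "\<dots> \<le> I A" by (rule IJ[OF AL])
    finally show "q ^ card A * (Z * (c * m) ^ card A * p A) \<le> q ^ card A * I A"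
      using q0 by (intro mult_left_mono) auto
  qed
  finally have TZ: "Z * (\<Sum>A\<in>Pow L. exp ((ln (exp b - 1) + ln c + ln (min (1/2) a)) * real (card A)) * p A) \<le> T"
    using T_eq by simp
  have Zt: "Ztil N a b TYPE('d) \<ge> 0"
    unfolding Ztil_def by (rule integral_nonneg_AE) auto
  show ?thesis
    unfolding PtilT
    using divide_right_mono[OF TZ Zt]
    unfolding Z_def p_def L_def by (simp add: mult.commute)
qed

end
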